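(* For positive real numbers $u_1,u_2,u_3,w_1,w_2,w_3$ define $$\mathsf K(u,w)=\frac{(u_1+w_1)(u_2+w_2)(u_3+w_3)+\max\{u_1u_2u_3,\,w_1w_2w_3\}}{\sqrt{(u_2u_3+w_2w_3+u_2w_3)(u_3u_1+w_3w_1+u_3w_1)(u_1u_2+w_1w_2+u_1w_2)}}.$$ Then $\mathsf K(u,w)\ge\sqrt3$ for all such arguments, with equality when $u_1=w_1$, $u_2=w_2$, $u_3=w_3$; moreover $\mathsf K$ is unbounded above on this domain.
   Context: Equivalently, with $\rho_i=u_i/w_i>0$, $\mathsf K^2=\dfrac{\big[(1+\rho_1)(1+\rho_2)(1+\rho_3)+\max\{1,\rho_1\rho_2\rho_3\}\big]^2}{(1+\rho_2\rho_3+\rho_2)(1+\rho_3\rho_1+\rho_3)(1+\rho_1\rho_2+\rho_1)}$ and the claim is $\mathsf K^2\ge3$. *)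

theory Defs
  imports Complex_Main
begin

definition K :: "real \<Rightarrow> real \<Rightarrow> real \<Rightarrow> real \<Rightarrow> real \<Rightarrow> real \<Rightarrow> real" where
  "K u1 u2 u3 w1 w2 w3 =
     ((u1 + w1) * (u2 + w2) * (u3 + w3) + max (u1 * u2 * u3) (w1 * w2 * w3)) /
     sqrt ((u2 * u3 + w2 * w3 + u2 * w3) * (u3 * u1 + w3 * w1 + u3 * w1) * (u1 * u2 + w1 * w2 + u1 * w2))"

end

theory Submission
  imports Defs
begin

lemma lin1: "(a::real) = b + 3*q + r \<Longrightarrow> 0 \<le> r \<Longrightarrow> x = s + q \<Longrightarrow> 3*s \<le> b \<Longrightarrow> 3*x \<le> a"
  by linarith

lemma key:
  fixes u1 u2 u3 w1 w2 w3 :: real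
  assumes pos: "u1 > 0" "u2 > 0" "u3 > 0" "w1 > 0" "w2 > 0" "w3 > 0"
  shows "3 * ((u2 * u3 + w2 * w3 + u2 * w3) * (u3 * u1 + w3 * w1 + u3 * w1) * (u1 * u2 + w1 * w2 + u1 * w2))
         \<le> ((u1 + w1) * (u2 + w2) * (u3 + w3) + max (u1 * u2 * u3) (w1 * w2 * w3))^2"
proof -
  define X where "X = u2 * u3 + w2 * w3 + u2 * w3"
  define Y where "Y = u3 * u1 + w3 * w1 + u3 * w1"
  define Z where "Z = u1 * u2 + w1 * w2 + u1 * w2"
  define P where "P = (u1 + w1) * (u2 + w2) * (u3 + w3)"
  define U where "U = u1 * u2 * u3"
  define W where "W = w1 * w2 * w3"
  have id1: "w1*X + w2*Y + w3*Z = P + 2*W - U"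
    unfolding X_def Y_def Z_def P_def U_def W_def by algebra
  have id2: "X*Y*Z = (w1*X)*(w2*Y) + (w2*Y)*(w3*Z) + (w3*Z)*(w1*X) + (U - W)*(P + W)"
    unfolding X_def Y_def Z_def P_def U_def W_def by algebra
  have cs: "3*((w1*X)*(w2*Y) + (w2*Y)*(w3*Z) + (w3*Z)*(w1*X)) \<le> (w1*X + w2*Y + w3*Z)^2"
  proof -
    have "0 \<le> (w1*X - w2*Y)^2 + (w2*Y - w3*Z)^2 + (w3*Z - w1*X)^2" by simp
    then show ?thesis by (simp add: power2_eq_square algebra_simps)
  qed
  have cs2: "3*((w1*X)*(w2*Y) + (w2*Y)*(w3*Z) + (w3*Z)*(w1*X)) \<le> (P + 2*W - U)^2"
    using cs id1 by simp
  have Ppos: "P > 0" unfolding P_def using pos by simp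
  have Upos: "U > 0" unfolding U_def using pos by simp
  have Wpos: "W > 0" unfolding W_def using pos by simp
  have main: "3*(X*Y*Z) \<le> (P + max U W)^2"
  proof (cases "W \<le> U")
    case True
    have m: "max U W = U" using True by simp
    have h0: "0 \<le> (U - W)*(P + W)" using True Ppos Wpos by simp
    have "(P + U)^2 = (P + 2*W - U)^2 + 3*((U - W)*(P + W)) + (U - W)*(P + W)"
      by (simp add: power2_eq_square algebra_simps)
    then show ?thesis unfolding m using lin1 h0 id2 cs2 by blast
  next
    case False
    have m: "max U W = W" using False by simp
    have h0: "0 \<le> (W - U)*(P + U)" using False Ppos Upos by simp
    have "(P + W)^2 = (P + 2*W - U)^2 + 3*((U - W)*(P + W)) + (W - U)*(P + U)"
      by (simp add: power2_eq_square algebra_simps)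
    then show ?thesis unfolding m using lin1 h0 id2 cs2 by blast
  qed
  then show ?thesis unfolding X_def Y_def Z_def P_def U_def W_def by (simp add: mult.assoc)
qed

lemma div_sqrt_le:
  fixes c N D :: real
  assumes "N > 0" "D > 0" "c \<ge> 0" "c^2 * D \<le> N^2"
  shows "c \<le> N / sqrt D"
proof -
  have "sqrt (c^2 * D) \<le> sqrt (N^2)" using assms(4) by (rule real_sqrt_le_mono)
  then have "c * sqrt D \<le> N" using assms by (simp add: real_sqrt_mult)
  then show ?thesis using assms by (simp add: pos_le_divide_eq)
qed

lemma div_sqrt_less:
  fixes c N D :: real
  assumes "N > 0" "D > 0" "c \<ge> 0" "c^2 * D < N^2"
  shows "c < N / sqrt D"
proof -
  have "sqrt (c^2 * D) < sqrt (N^2)" using assms(4) by (rule real_sqrt_less_mono)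
  then have "c * sqrt D < N" using assms by (simp add: real_sqrt_mult)
  then show ?thesis using assms by (simp add: pos_less_divide_eq)
qed

lemma part1:
  fixes u1 u2 u3 w1 w2 w3 :: real
  assumes pos: "u1 > 0" "u2 > 0" "u3 > 0" "w1 > 0" "w2 > 0" "w3 > 0"
  shows "K u1 u2 u3 w1 w2 w3 \<ge> sqrt 3"
proof -
  have k: "3 * ((u2 * u3 + w2 * w3 + u2 * w3) * (u3 * u1 + w3 * w1 + u3 * w1) * (u1 * u2 + w1 * w2 + u1 * w2))
         \<le> ((u1 + w1) * (u2 + w2) * (u3 + w3) + max (u1 * u2 * u3) (w1 * w2 * w3))^2"
    using key[OF pos] .
  have Np: "(u1 + w1) * (u2 + w2) * (u3 + w3) + max (u1 * u2 * u3) (w1 * w2 * w3) > 0"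
    using pos by (simp add: add_pos_nonneg max_def)
  have Dp: "(u2 * u3 + w2 * w3 + u2 * w3) * (u3 * u1 + w3 * w1 + u3 * w1) * (u1 * u2 + w1 * w2 + u1 * w2) > 0"
    by (intro mult_pos_pos add_pos_pos) (simp_all add: pos)
  show ?thesis unfolding K_def
    by (rule div_sqrt_le[OF Np Dp]) (use k in auto)
qed

lemma part2:
  fixes u1 u2 u3 :: real
  assumes pos: "u1 > 0" "u2 > 0" "u3 > 0"
  shows "K u1 u2 u3 u1 u2 u3 = sqrt 3"
proof -
  define U where "U = u1 * u2 * u3"
  have Up: "U > 0" unfolding U_def using pos by simp
  have N: "(u1 + u1) * (u2 + u2) * (u3 + u3) + max (u1 * u2 * u3) (u1 * u2 * u3) = 9 * U"
    unfolding U_def by simp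
  have D: "(u2 * u3 + u2 * u3 + u2 * u3) * (u3 * u1 + u3 * u1 + u3 * u1) * (u1 * u2 + u1 * u2 + u1 * u2)
       = (3 * U)^2 * 3"
    unfolding U_def by (simp add: power2_eq_square algebra_simps)
  have s: "sqrt ((3 * U)^2 * 3) = 3 * U * sqrt 3"
    by (simp only: real_sqrt_mult real_sqrt_abs) (use Up in simp)
  have s3: "sqrt 3 * sqrt 3 = (3::real)" by simp
  have "9 * U / (3 * U * sqrt 3) = sqrt 3" using Up s3
    by (simp add: field_simps)
  then show ?thesis unfolding K_def N D s .
qed

lemma part3:
  fixes M :: real
  shows "\<exists>u1 u2 u3 w1 w2 w3 :: real. u1 > 0 \<and> u2 > 0 \<and> u3 > 0 \<and> w1 > 0 \<and> w2 > 0 \<and> w3 > 0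
            \<and> K u1 u2 u3 w1 w2 w3 > M"
proof -
  define x where "x = 2 * M^2 + 1"
  have xp: "x > 0" unfolding x_def by (simp add: add_nonneg_pos)
  define N where "N = (x + 1) * (1 + x) * (1 + x) + max (x * 1 * 1) (1 * x * x)"
  define D where "D = (1 * 1 + x * x + 1 * x) * (1 * x + x * 1 + 1 * 1) * (x * 1 + 1 * x + x * x)"
  have KK: "K x 1 1 1 x x = N / sqrt D" unfolding K_def N_def D_def ..
  have N1: "N \<ge> (x + 1)^3" unfolding N_def using xp by (simp add: power3_eq_cube algebra_simps max_def)
  have Np: "N > 0" using N1 xp by (smt (verit) zero_less_power)
  have DD: "D = (x^2 + x + 1) * (2*x + 1) * (x^2 + 2*x)" unfolding D_def
    by (simp add: power2_eq_square algebra_simps)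
  have Dp: "D > 0" unfolding DD using xp by (intro mult_pos_pos add_pos_pos) auto
  have f1: "x^2 + x + 1 < (x+1)^2" using xp by (simp add: power2_eq_square algebra_simps)
  have f2: "2*x + 1 < 2 * (x+1)" by simp
  have f3: "x^2 + 2*x < (x+1)^2" by (simp add: power2_eq_square algebra_simps)
  have p1: "0 < (x+1)^2" using xp by simp
  have p2: "0 \<le> 2*x + 1" using xp by simp
  have p3: "0 \<le> x^2 + 2*x" using xp by simp
  have g: "(x^2 + x + 1) * (2*x + 1) < (x+1)^2 * (2 * (x+1))"
    by (rule mult_strict_mono[OF f1 f2 p1 p2])
  have p4: "0 < (x+1)^2 * (2 * (x+1))" using xp by simp
  have "D < (x+1)^2 * (2 * (x+1)) * (x+1)^2" unfolding DD
    by (rule mult_strict_mono[OF g f3 p4 p3])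
  moreover have "(x+1)^2 * (2 * (x+1)) * (x+1)^2 = 2 * (x+1)^5" by algebra
  ultimately have D2: "D < 2 * (x+1)^5" by simp
  have "M^2 * D \<le> M^2 * (2 * (x+1)^5)" using D2 by (simp add: mult_left_mono)
  also have "\<dots> = (2 * M^2) * (x+1)^5" by simp
  also have "\<dots> < (x + 1) * (x+1)^5"
    by (rule mult_strict_right_mono) (use xp in \<open>auto simp: x_def\<close>)
  also have "\<dots> = ((x+1)^3)^2" by algebra
  also have "\<dots> \<le> N^2" by (rule power_mono[OF N1]) (use xp in simp)
  finally have "\<bar>M\<bar>^2 * D < N^2" by simp
  then have "\<bar>M\<bar> < N / sqrt D" using div_sqrt_less[OF Np Dp, of "\<bar>M\<bar>"] by simp
  then have "K x 1 1 1 x x > M" unfolding KK by linarith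
  then show ?thesis using xp by (intro exI[of _ x] exI[of _ 1]) auto
qed

theorem mainTheorem5:
  shows "(\<forall>u1 u2 u3 w1 w2 w3 :: real. u1 > 0 \<and> u2 > 0 \<and> u3 > 0 \<and> w1 > 0 \<and> w2 > 0 \<and> w3 > 0
            \<longrightarrow> K u1 u2 u3 w1 w2 w3 \<ge> sqrt 3)
       \<and> (\<forall>u1 u2 u3 :: real. u1 > 0 \<and> u2 > 0 \<and> u3 > 0 \<longrightarrow> K u1 u2 u3 u1 u2 u3 = sqrt 3)
       \<and> (\<forall>M :: real. \<exists>u1 u2 u3 w1 w2 w3 :: real. u1 > 0 \<and> u2 > 0 \<and> u3 > 0 \<and> w1 > 0 \<and> w2 > 0 \<and> w3 > 0
            \<and> K u1 u2 u3 w1 w2 w3 > M)"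
  using part1 part2 part3 by blast

end
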